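(* In the quantum cluster algebra $\mathcal{A}_q(B,\Lambda)$ of Kronecker type, for every $n\ge0$, $$x_{n+3}=x_1^{-n-1}x_2^{n+2}+\sum_{\substack{p,r\ge0\\ p+r\le n}}\begin{bmatrix}n-r\\ p\end{bmatrix}_q\begin{bmatrix}n+1-p\\ r\end{bmatrix}_q M[2p-n-1,\,2r-n,\,n+1-r,\,p].$$
   Context: Setup as follows. Based quantum torus: $\mathbb{Z}[q^{\pm1/2}]$-algebra with basis $M[a]$, $a\in\mathbb{Z}^4$, and $M[a]M[b]=q^{\frac12a^T\Lambda b}M[a+b]$, with $B=\begin{pmatrix}0&2\\-2&0\\1&0\\0&1\end{pmatrix}$, $\Lambda=\begin{pmatrix}0&0&-1&0\\0&0&0&-1\\1&0&0&-2\\0&1&2&0\end{pmatrix}$; $x_1=M[e_1],x_2=M[e_2],y_1=M[e_3],y_2=M[e_4]$. $\mathcal{A}_q(B,\Lambda)$ is the Berenstein–Zelevinsky quantum cluster algebra with this initial quantum seed; quantum mutation at $k$ replaces $x'_k$ by $M_{\Lambda'}[-e_k+\sum_{b'_{ik}>0}b'_{ik}e_i]+M_{\Lambda'}[-e_k-\sum_{b'_{ik}<0}b'_{ik}e_i]$. For $n\ge0$, $x_{n+3}$ is the quantum cluster variable produced at the $(n+1)$-st step of mutating the initial seed successively at $1,2,1,2,\dots$ (so $x_3=M[-1,2,0,0]+M[-1,0,1,0]$). Quantum integers and binomials: $[n]_q=\frac{q^{n/2}-q^{-n/2}}{q^{1/2}-q^{-1/2}}$, $[n]_q!=\prod_{k=1}^n[k]_q$,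 $\begin{bmatrix}n\\k\end{bmatrix}_q=\frac{[n]_q!}{[k]_q![n-k]_q!}\in\mathbb{Z}[q^{\pm1/2}]$. *)

theory Defs
  imports Main
begin

text \<open>Quantum seeds are realised inside an arbitrary division ring 'k containing the
based quantum torus.  A seed is a triple (X, B, L): the cluster
X :: nat => 'k (indices 0..3), the 4x2 exchange matrix B and the 4x4
quasi-commutation matrix L (all indices 0-based).  The element v plays the role of q^(1/2).\<close>

type_synonym 'k qseed = "(nat \<Rightarrow> 'k) \<times> (nat \<Rightarrow> nat \<Rightarrow> int) \<times> (nat \<Rightarrow> nat \<Rightarrow> int)"

definition B0 :: "nat \<Rightarrow> nat \<Rightarrow> int" where
  "B0 i j = (if i = 0 \<and> j = 1 then 2 else if i = 1 \<and> j = 0 then -2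
             else if i = 2 \<and> j = 0 then 1 else if i = 3 \<and> j = 1 then 1 else 0)"

definition L0 :: "nat \<Rightarrow> nat \<Rightarrow> int" where
  "L0 i j = (if i = 0 \<and> j = 2 then -1 else if i = 1 \<and> j = 3 then -1
             else if i = 2 \<and> j = 0 then 1 else if i = 2 \<and> j = 3 then -2
             else if i = 3 \<and> j = 1 then 1 else if i = 3 \<and> j = 2 then 2 else 0)"

definition seedM :: "'k::division_ring \<Rightarrow> (nat \<Rightarrow> 'k) \<Rightarrow> (nat \<Rightarrow> nat \<Rightarrow> int) \<Rightarrow> (nat \<Rightarrow> int) \<Rightarrow> 'k" where
  "seedM v X L a =
     v powi (\<Sum>m<4. \<Sum>l<m. a l * a m * L m l)
     * (X 0 powi a 0) * (X 1 powi a 1) * (X 2 powi a 2) * (X 3 powi a 3)"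

text \<open>Matrix E_epsilon of BZ (epsilon = +1) for mutation in direction k.\<close>
definition mutE :: "(nat \<Rightarrow> nat \<Rightarrow> int) \<Rightarrow> nat \<Rightarrow> nat \<Rightarrow> nat \<Rightarrow> int" where
  "mutE B k i j = (if j \<noteq> k then (if i = j then 1 else 0)
                   else if i = k then -1 else max 0 (- B i k))"

definition mutB :: "nat \<Rightarrow> (nat \<Rightarrow> nat \<Rightarrow> int) \<Rightarrow> nat \<Rightarrow> nat \<Rightarrow> int" where
  "mutB k B i j = (if i = k \<or> j = k then - B i j
                   else B i j + (\<bar>B i k\<bar> * B k j + B i k * \<bar>B k j\<bar>) div 2)"

definition mutL :: "(nat \<Rightarrow> nat \<Rightarrow> int) \<Rightarrow> nat \<Rightarrow> (nat \<Rightarrow> nat \<Rightarrow> int) \<Rightarrow> nat \<Rightarrow> nat \<Rightarrow> int" where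
  "mutL B k L i j = (\<Sum>a<4. \<Sum>b<4. mutE B k a i * L a b * mutE B k b j)"

definition mutate :: "'k::division_ring \<Rightarrow> nat \<Rightarrow> 'k qseed \<Rightarrow> 'k qseed" where
  "mutate v k S = (case S of (X, B, L) \<Rightarrow>
     ((\<lambda>i. if i = k then
              seedM v X L (\<lambda>i. (if i = k then -1 else 0) + max 0 (B i k))
            + seedM v X L (\<lambda>i. (if i = k then -1 else 0) + max 0 (- B i k))
            else X i),
      mutB k B, mutL B k L))"

text \<open>Seeds obtained from the initial seed by mutating at 1,2,1,2,... (0-based: 0,1,0,1,...).
  Mk is the embedding of the based quantum torus basis M[a1,a2,a3,a4].\<close>
primrec kseed :: "'k::division_ring \<Rightarrow> (int \<Rightarrow> int \<Rightarrow> int \<Rightarrow> int \<Rightarrow> 'k) \<Rightarrow> nat \<Rightarrow> 'k qseed" where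
  "kseed v Mk 0 = ((\<lambda>i. if i = 0 then Mk 1 0 0 0 else if i = 1 then Mk 0 1 0 0
                         else if i = 2 then Mk 0 0 1 0 else Mk 0 0 0 1), B0, L0)"
| "kseed v Mk (Suc n) = mutate v (n mod 2) (kseed v Mk n)"

text \<open>x_{n+3} = new cluster variable produced at the (n+1)-st mutation.\<close>
definition kron_x :: "'k::division_ring \<Rightarrow> (int \<Rightarrow> int \<Rightarrow> int \<Rightarrow> int \<Rightarrow> 'k) \<Rightarrow> nat \<Rightarrow> 'k" where
  "kron_x v Mk m = fst (kseed v Mk (m - 2)) ((m - 3) mod 2)"

definition qint :: "'k::division_ring \<Rightarrow> nat \<Rightarrow> 'k" where
  "qint v n = (v ^ n - inverse v ^ n) / (v - inverse v)"

primrec qfact :: "'k::division_ring \<Rightarrow> nat \<Rightarrow> 'k" where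
  "qfact v 0 = 1"
| "qfact v (Suc n) = qfact v n * qint v (Suc n)"

definition qbinom :: "'k::division_ring \<Rightarrow> nat \<Rightarrow> nat \<Rightarrow> 'k" where
  "qbinom v n k = qfact v n / (qfact v k * qfact v (n - k))"

definition lamform :: "int \<Rightarrow> int \<Rightarrow> int \<Rightarrow> int \<Rightarrow> int \<Rightarrow> int \<Rightarrow> int \<Rightarrow> int \<Rightarrow> int" where
  "lamform a1 a2 a3 a4 b1 b2 b3 b4 =
     (let a = [a1,a2,a3,a4]; b = [b1,b2,b3,b4] in
      (\<Sum>i<4. \<Sum>j<4. a ! i * L0 i j * b ! j))"

text \<open>Mk embeds the based quantum torus A_q(B,Lambda)-ambient torus into the division ring:
  product rule, unit, and Z[v^{+-1}]-linear independence of the basis (injectivity).\<close>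
definition torus_embedding :: "'k::division_ring \<Rightarrow> (int \<Rightarrow> int \<Rightarrow> int \<Rightarrow> int \<Rightarrow> 'k) \<Rightarrow> bool" where
  "torus_embedding v Mk \<longleftrightarrow>
     (\<forall>z. v * z = z * v) \<and>
     Mk 0 0 0 0 = 1 \<and>
     (\<forall>a1 a2 a3 a4 b1 b2 b3 b4.
        Mk a1 a2 a3 a4 * Mk b1 b2 b3 b4
          = v powi (lamform a1 a2 a3 a4 b1 b2 b3 b4) * Mk (a1+b1) (a2+b2) (a3+b3) (a4+b4)) \<and>
     (\<forall>(S :: (int \<times> int \<times> int \<times> int \<times> int) set) (c :: int \<times> int \<times> int \<times> int \<times> int \<Rightarrow> int).
        finite S \<longrightarrow>
        (\<Sum>(j, a1, a2, a3, a4) \<in> S. of_int (c (j, a1, a2, a3, a4)) * v powi j * Mk a1 a2 a3 a4) = 0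
        \<longrightarrow> (\<forall>s\<in>S. c s = 0))"

end

theory Submission
  imports Defs "HOL-Library.Product_Plus"
begin


lemma lamform_eq: "lamform a1 a2 a3 a4 b1 b2 b3 b4 = - a1*b3 - a2*b4 + a3*b1 - 2*a3*b4 + a4*b2 + 2*a4*b3"
  by (simp add: lamform_def Let_def L0_def eval_nat_numeral lessThan_Suc algebra_simps)

definition cen :: "'k::ring_1 \<Rightarrow> bool" where "cen z \<longleftrightarrow> (\<forall>x. z * x = x * z)"

lemma cenD: "cen z \<Longrightarrow> z * x = x * z" by (simp add: cen_def)
lemma cen_mult[intro]: "cen a \<Longrightarrow> cen b \<Longrightarrow> cen (a * b)"
  unfolding cen_def by (metis mult.assoc)
lemma cen_add[intro]: "cen a \<Longrightarrow> cen b \<Longrightarrow> cen (a + b)"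
  unfolding cen_def by (simp add: distrib_left distrib_right)
lemma cen_diff[intro]: "cen a \<Longrightarrow> cen b \<Longrightarrow> cen (a - b)"
  unfolding cen_def by (simp add: left_diff_distrib right_diff_distrib)
lemma cen_uminus[intro]: "cen a \<Longrightarrow> cen (- a)"
  unfolding cen_def by simp
lemma cen_0[intro]: "cen 0" and cen_1[intro]: "cen 1" unfolding cen_def by simp_all
lemma cen_of_int[intro]: "cen (of_int k :: 'k::ring_1)"
  unfolding cen_def by (simp add: mult_of_int_commute)
lemma cen_sum[intro]: "(\<And>i. i \<in> A \<Longrightarrow> cen (f i)) \<Longrightarrow> cen (sum f A)"
  by (induction A rule: infinite_finite_induct) auto
lemma cen_inverse[intro]: "cen (a::'k::division_ring) \<Longrightarrow> cen (inverse a)"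
proof -
  assume c: "cen a"
  show ?thesis unfolding cen_def
  proof
    fix x
    show "inverse a * x = x * inverse a"
    proof (cases "a = 0")
      case True then show ?thesis by simp
    next
      case False
      have "inverse a * x = inverse a * (x * a) * inverse a" using False by (simp add: mult.assoc)
      also have "\<dots> = inverse a * (a * x) * inverse a" using c by (simp add: cen_def)
      also have "\<dots> = x * inverse a" using False by (simp add: mult.assoc[symmetric])
      finally show ?thesis .
    qed
  qed
qed
lemma cen_power[intro]: "cen a \<Longrightarrow> cen (a ^ n)"
  by (induction n) auto
lemma cen_powi[intro]: "cen (a::'k::division_ring) \<Longrightarrow> cen (a powi n)"
  by (cases n rule: int_cases4) (auto simp: power_int_minus)

fun Gn :: "'k::division_ring \<Rightarrow> nat \<Rightarrow> nat \<Rightarrow> 'k" where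
  "Gn v 0 0 = 1"
| "Gn v 0 (Suc k) = 0"
| "Gn v (Suc n) 0 = 1"
| "Gn v (Suc n) (Suc k) = v powi (int k + 1) * Gn v n (Suc k) + v powi (int k - int n) * Gn v n k"

definition Gi :: "'k::division_ring \<Rightarrow> int \<Rightarrow> int \<Rightarrow> 'k" where
  "Gi v a b = (if 0 \<le> a \<and> 0 \<le> b then Gn v (nat a) (nat b) else 0)"

locale kron =
  fixes v :: "'k::division_ring" and Mk :: "int \<Rightarrow> int \<Rightarrow> int \<Rightarrow> int \<Rightarrow> 'k"
  assumes te: "torus_embedding v Mk"
begin

lemma vc: "v * z = z * v" using te by (simp add: torus_embedding_def)
lemma cen_v[intro]: "cen v" using vc by (simp add: cen_def)
lemma vc_pow: "v powi k * z = z * v powi k" using cen_powi[OF cen_v] by (simp add: cen_def)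
lemma Mk0: "Mk 0 0 0 0 = 1" using te by (simp add: torus_embedding_def)
lemma Mkmul: "Mk a1 a2 a3 a4 * Mk b1 b2 b3 b4 =
   v powi (- a1*b3 - a2*b4 + a3*b1 - 2*a3*b4 + a4*b2 + 2*a4*b3) * Mk (a1+b1) (a2+b2) (a3+b3) (a4+b4)"
  using te by (simp add: torus_embedding_def lamform_eq)
lemma indep: "finite S \<Longrightarrow>
   (\<Sum>(j, a1, a2, a3, a4) \<in> S. of_int (c (j, a1, a2, a3, a4)) * v powi j * Mk a1 a2 a3 a4) = 0
    \<Longrightarrow> s \<in> S \<Longrightarrow> c s = 0"
  using te unfolding torus_embedding_def by blast

lemma v_nz: "v \<noteq> 0"
proof
  assume v0: "v = 0"
  have "(\<Sum>(j, a1, a2, a3, a4) \<in> {(1,0,0,0,0)}. of_int ((\<lambda>_. 1::int) (j, a1, a2, a3, a4)) * v powi j * Mk a1 a2 a3 a4) = 0"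
    using v0 by simp
  from indep[OF _ this, of "(1,0,0,0,0)"] show False by simp
qed

lemma vpow_ne1: "k \<noteq> 0 \<Longrightarrow> v powi k \<noteq> 1"
proof
  assume k: "k \<noteq> 0" and e: "v powi k = 1"
  let ?c = "\<lambda>(j::int, a1::int, a2::int, a3::int, a4::int). if j = k then 1 else (-1::int)"
  have "(\<Sum>(j, a1, a2, a3, a4) \<in> {(k,0,0,0,0), (0,0,0,0,0)}. of_int (?c (j, a1, a2, a3, a4)) * v powi j * Mk a1 a2 a3 a4) = 0"
    using e k by (simp add: Mk0)
  from indep[OF _ this, of "(k,0,0,0,0)"] show False by simp
qed


lemma vpadd: "v powi a * v powi b = v powi (a + b)"
  using v_nz by (simp add: power_int_add)
lemma vpadd2: "v powi a * (v powi b * x) = v powi (a + b) * x"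
  by (simp add: vpadd mult.assoc[symmetric])

lemma cen_Gn[intro]: "cen (Gn v n k)"
proof (induction n arbitrary: k)
  case 0 then show ?case by (cases k) auto
next
  case (Suc n) then show ?case
    by (cases k) (simp_all add: cen_1 cen_add cen_mult cen_powi cen_v)
qed
lemma cen_Gi[intro]: "cen (Gi v a b)"
  by (auto simp: Gi_def)
lemma Gn_zero: "n < k \<Longrightarrow> Gn v n k = 0"
proof (induction n arbitrary: k)
  case 0 then show ?case by (cases k) auto
next
  case (Suc n) then show ?case by (cases k) auto
qed
lemma Gn_nn[simp]: "Gn v n n = 1"
  by (induction n) (auto simp: Gn_zero)

lemma d_nz: "v - inverse v \<noteq> 0"
proof
  assume "v - inverse v = 0"
  then have "v * v = v * inverse v" by simp
  then have "v powi 2 = 1" using v_nz by (simp add: power2_eq_square)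
  with vpow_ne1[of 2] show False by simp
qed

lemma qint_alt: "qint v n = (v powi int n - v powi (- int n)) * inverse (v - inverse v)"
  by (simp add: qint_def divide_inverse power_int_minus power_inverse)

lemma qint_add: "qint v (a + b) = v powi int a * qint v b + v powi (- int b) * qint v a"
proof -
  have e1: "int a + - int b = - int b + int a" "- int b + - int a = - int (a + b)" "int a + int b = int (a+b)"
    by simp_all
  have num: "v powi int (a + b) - v powi (- int (a + b)) =
     v powi int a * (v powi int b - v powi (- int b)) + v powi (- int b) * (v powi int a - v powi (- int a))"
    unfolding right_diff_distrib vpadd e1 by simp
  show ?thesis unfolding qint_alt num
    by (simp add: distrib_right mult.assoc)
qed

lemma cen_qint[intro]: "cen (qint v n)"
  unfolding qint_alt by (intro cen_mult cen_diff cen_inverse cen_powi cen_v)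
lemma cen_qfact[intro]: "cen (qfact v n)"
  by (induction n) auto

lemma qint_nz: "n \<ge> 1 \<Longrightarrow> qint v n \<noteq> 0"
proof
  assume n: "n \<ge> 1" and q: "qint v n = 0"
  have "v powi int n - v powi (- int n) = 0"
    using q d_nz unfolding qint_alt by simp
  then have "v powi int n * v powi int n = v powi (- int n) * v powi int n" by (simp del: power_int_of_nat)
  then have "v powi (int n + int n) = v powi (- int n + int n)" by (simp only: vpadd)
  moreover have "2 * int n = int n + int n" "- int n + int n = 0" by simp_all
  ultimately have "v powi (2 * int n) = 1" by (simp only: power_int_0_right)
  with vpow_ne1[of "2 * int n"] n show False by simp
qed
lemma qfact_nz: "qfact v n \<noteq> 0"
  by (induction n) (auto simp: qint_nz)

lemma qfact_G: "k \<le> n \<Longrightarrow> qfact v n = Gn v n k * (qfact v k * qfact v (n - k))"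
proof (induction n arbitrary: k)
  case 0 then show ?case by simp
next
  case (Suc n)
  show ?case
  proof (cases k)
    case 0 then show ?thesis by simp
  next
    case (Suc j)
    with Suc.prems have jn: "j \<le> n" by simp
    show ?thesis
    proof (cases "j = n")
      case True then show ?thesis using Suc Gn_nn[of "Suc n"] by (simp del: Gn.simps)
    next
      case False
      with jn have jn': "j < n" by simp
      have IH1: "qfact v n = Gn v n (Suc j) * (qfact v (Suc j) * qfact v (n - Suc j))"
        using Suc.IH[of "Suc j"] jn' by simp
      have IH2: "qfact v n = Gn v n j * (qfact v j * qfact v (n - j))"
        using Suc.IH[of j] jn by simp
      have nj: "n - j = Suc (n - Suc j)" using jn' by simp
      have ex: "int j - int n = - int (n - j)" using jn by simp
      have eq: "int (Suc j) = int j + 1" by simp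
      have eq2: "Suc j + (n - j) = Suc n" using jn by simp
      have qs: "qint v (Suc n) = v powi (int j + 1) * qint v (n - j) + v powi (- int (n - j)) * qint v (Suc j)"
        using qint_add[of "Suc j" "n - j", unfolded eq eq2] .
      have T1: "v powi (int j + 1) * Gn v n (Suc j) * (qfact v (Suc j) * qfact v (n - j))
              = v powi (int j + 1) * (qfact v n * qint v (n - j))"
        by (simp add: nj IH1 mult.assoc del: power_int_of_nat)
      have T2: "v powi (int j - int n) * Gn v n j * (qfact v (Suc j) * qfact v (n - j))
              = v powi (- int (n - j)) * (qfact v n * qint v (Suc j))"
      proof -
        have "qint v (Suc j) * qfact v (n - j) = qfact v (n - j) * qint v (Suc j)"
          using cen_qint cenD by blast
        then have "qfact v (Suc j) * qfact v (n - j) = (qfact v j * qfact v (n - j)) * qint v (Suc j)"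
          by (simp add: mult.assoc)
        then show ?thesis by (simp add: ex IH2 mult.assoc del: power_int_of_nat)
      qed
      have c1: "v powi (int j + 1) * (qfact v n * qint v (n - j)) = qfact v n * (v powi (int j + 1) * qint v (n - j))"
        using cenD[OF cen_powi[OF cen_v]] by (metis mult.assoc)
      have c2: "v powi (- int (n - j)) * (qfact v n * qint v (Suc j)) = qfact v n * (v powi (- int (n - j)) * qint v (Suc j))"
        using cenD[OF cen_powi[OF cen_v]] by (metis mult.assoc)
      have "Gn v (Suc n) k * (qfact v k * qfact v (Suc n - k)) =
          v powi (int j + 1) * Gn v n (Suc j) * (qfact v (Suc j) * qfact v (n - j))
        + v powi (int j - int n) * Gn v n j * (qfact v (Suc j) * qfact v (n - j))"
        using Suc by (simp add: distrib_right del: power_int_of_nat)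
      also have "\<dots> = qfact v n * qint v (Suc n)"
        unfolding T1 T2 c1 c2 qs by (simp add: distrib_left del: power_int_of_nat)
      finally show ?thesis by simp
    qed
  qed
qed

lemma qbinom_G: "k \<le> n \<Longrightarrow> qbinom v n k = Gn v n k"
proof -
  assume k: "k \<le> n"
  have nz: "qfact v k * qfact v (n - k) \<noteq> 0" using qfact_nz by simp
  show ?thesis unfolding qbinom_def qfact_G[OF k] divide_inverse
    using nz by (metis mult.assoc right_inverse mult_1_right)
qed

lemma Gn_sym: "k \<le> n \<Longrightarrow> Gn v n k = Gn v n (n - k)"
proof -
  assume k: "k \<le> n"
  have "qbinom v n (n - k) = qbinom v n k"
  proof -
    have "qfact v (n - k) * qfact v k = qfact v k * qfact v (n - k)" using cenD[OF cen_qfact] by blast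
    then show ?thesis unfolding qbinom_def using k by simp
  qed
  then show ?thesis using k by (simp add: qbinom_G)
qed

lemma Gn_n0[simp]: "Gn v n 0 = 1" by (cases n) auto
lemma Gi_neg1: "b < 0 \<Longrightarrow> Gi v a b = 0" by (simp add: Gi_def)
lemma Gi_neg2: "a < 0 \<Longrightarrow> Gi v a b = 0" by (simp add: Gi_def)
lemma Gi_big: "a < b \<Longrightarrow> Gi v a b = 0" by (simp add: Gi_def Gn_zero nat_less_eq_zless)
lemma Gi_0[simp]: "0 \<le> a \<Longrightarrow> Gi v a 0 = 1" by (simp add: Gi_def)
lemma Gi_aa[simp]: "0 \<le> a \<Longrightarrow> Gi v a a = 1" by (simp add: Gi_def)

lemma Gi_sym: "0 \<le> m \<Longrightarrow> Gi v m j = Gi v m (m - j)"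
proof -
  assume m: "0 \<le> m"
  show ?thesis
  proof (cases "0 \<le> j \<and> j \<le> m")
    case True
    then have "nat (m - j) = nat m - nat j" by (simp add: nat_diff_distrib)
    moreover have "nat j \<le> nat m" using True by (simp add: nat_mono)
    ultimately show ?thesis using True m Gn_sym[of "nat j" "nat m"] by (simp add: Gi_def)
  next
    case False
    then show ?thesis using m by (auto simp: Gi_neg1 Gi_big)
  qed
qed

lemma Gi_form1: "1 \<le> a \<Longrightarrow> Gi v a b = v powi b * Gi v (a - 1) b + v powi (b - a) * Gi v (a - 1) (b - 1)"
proof -
  assume a: "1 \<le> a"
  show ?thesis
  proof (cases "b < 0")
    case True then show ?thesis by (simp add: Gi_neg1)
  next
    case False
    show ?thesis
    proof (cases "b = 0")
      case True then show ?thesis using a by (simp add: Gi_neg1)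
    next
      case False
      with \<open>\<not> b < 0\<close> have b: "1 \<le> b" by simp
      obtain n where n: "a = int n + 1" using a by (metis add.commute int_ops(2) le_iff_add nat_int plus_int_code(2) zle_iff_zadd)
      obtain k where k: "b = int k + 1" using b by (metis add.commute int_ops(2) le_iff_add nat_int plus_int_code(2) zle_iff_zadd)
      have "Gi v a b = Gn v (Suc n) (Suc k)" using n k by (simp add: Gi_def nat_add_distrib)
      also have "\<dots> = v powi b * Gi v (a - 1) b + v powi (b - a) * Gi v (a - 1) (b - 1)"
        using n k by (simp add: Gi_def nat_add_distrib del: power_int_of_nat)
      finally show ?thesis .
    qed
  qed
qed

lemma Gi_form2: "1 \<le> a \<Longrightarrow> Gi v a b = v powi (- b) * Gi v (a - 1) b + v powi (a - b) * Gi v (a - 1) (b - 1)"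
proof -
  assume a: "1 \<le> a"
  have "Gi v a b = Gi v a (a - b)" using a Gi_sym[of a b] by simp
  also have "\<dots> = v powi (a - b) * Gi v (a - 1) (a - b) + v powi (- b) * Gi v (a - 1) (a - b - 1)"
    using Gi_form1[OF a, of "a - b"] by simp
  also have "Gi v (a - 1) (a - b) = Gi v (a - 1) (b - 1)" using a Gi_sym[of "a - 1" "b - 1"] by simp
  also have "Gi v (a - 1) (a - b - 1) = Gi v (a - 1) b"
  proof -
    have e: "a - b - 1 = a - 1 - b" by simp
    have "Gi v (a - 1) b = Gi v (a - 1) (a - 1 - b)" using a by (intro Gi_sym) simp
    then show ?thesis unfolding e by simp
  qed
  finally show ?thesis by (simp add: add.commute)
qed

lemma Gi_form1': "a \<noteq> 0 \<or> b \<noteq> 0 \<Longrightarrow> Gi v a b = v powi b * Gi v (a - 1) b + v powi (b - a) * Gi v (a - 1) (b - 1)"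
  apply (cases "1 \<le> a") apply (simp add: Gi_form1)
  apply (cases "a < 0") apply (simp add: Gi_neg2)
  apply (cases "b < 0") apply (simp add: Gi_neg1 Gi_neg2)
  apply (simp add: Gi_big Gi_neg2)
  done
lemma Gi_form2': "a \<noteq> 0 \<or> b \<noteq> 0 \<Longrightarrow> Gi v a b = v powi (- b) * Gi v (a - 1) b + v powi (a - b) * Gi v (a - 1) (b - 1)"
  apply (cases "1 \<le> a") apply (simp add: Gi_form2)
  apply (cases "a < 0") apply (simp add: Gi_neg2)
  apply (cases "b < 0") apply (simp add: Gi_neg1 Gi_neg2)
  apply (simp add: Gi_big Gi_neg2)
  done

definition Kc :: "int \<Rightarrow> int \<Rightarrow> int \<Rightarrow> 'k" where
  "Kc N b3 b4 = Gi v (b3 - 1) b4 * Gi v (N + 1 - b4) (N + 1 - b3) + (if b3 = 0 \<and> b4 = 0 then 1 else 0)"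

lemma Gi_vp: "Gi v a b * (v powi k * y) = v powi k * (Gi v a b * y)"
  using cenD[OF cen_Gi, of a b "v powi k"] by (metis mult.assoc)
lemma Gi_vp1: "Gi v a b * v powi k = v powi k * Gi v a b"
  using cenD[OF cen_Gi, of a b "v powi k"] by simp

lemma Gi_0_left: "Gi v 0 b = (if b = 0 then 1 else 0)"
  by (cases "b < 0") (auto simp: Gi_neg1 Gi_big)

lemma Kc_rec_L:
  assumes N: "0 \<le> N"
  shows "Kc N b3 b4 = v powi (b3 - b4) * Kc (N - 1) b3 b4 + v powi (b3 + b4 - N - 1) * Kc (N - 1) (b3 - 1) b4
     + v powi (b4 - b3 + 1) * Kc (N - 1) (b3 - 1) (b4 - 1) - v * Kc (N - 2) (b3 - 1) (b4 - 1)"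
proof (cases "b3 \<le> 0")
  case True
  then show ?thesis by (simp add: Kc_def Gi_neg2)
next
  case False
  show ?thesis
  proof (cases "b3 = 1")
    case b31: True
    show ?thesis
    proof (cases "b4 = 0")
      case True
      have "Gi v (N + 1) N = v powi (- N) * Gi v N N + v powi (N + 1 - N) * Gi v N (N - 1)"
        using Gi_form2[of "N+1" N] N by simp
      then show ?thesis using b31 True N by (simp add: Kc_def Gi_neg2 Gi_neg1 add.commute)
    next
      case False
      then show ?thesis using b31 N by (simp add: Kc_def Gi_neg2 Gi_neg1 Gi_0_left)
    qed
  next
    case False
    with \<open>\<not> b3 \<le> 0\<close> have b3: "2 \<le> b3" by simp
    define A where "A = b3 - 1"
    define B where "B = N + 1 - b4"
    define p where "p = b4"
    define r where "r = N + 1 - b3"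
    have A1: "1 \<le> A" using b3 by (simp add: A_def)
    have K0: "Kc N b3 b4 = Gi v A p * Gi v B r" using b3 by (simp add: Kc_def A_def B_def p_def r_def diff_diff_eq2)
    have K1: "Kc (N - 1) b3 b4 = Gi v A p * Gi v (B - 1) (r - 1)" using b3 by (simp add: Kc_def A_def B_def p_def r_def diff_diff_eq2)
    have K2: "Kc (N - 1) (b3 - 1) b4 = Gi v (A - 1) p * Gi v (B - 1) r"
    proof -
      show ?thesis using b3 by (simp add: Kc_def A_def B_def p_def r_def diff_diff_eq2)
    qed
    have K3: "Kc (N - 1) (b3 - 1) (b4 - 1) = Gi v (A - 1) (p - 1) * Gi v B r" using b3 by (simp add: Kc_def A_def B_def p_def r_def diff_diff_eq2)
    have K4: "Kc (N - 2) (b3 - 1) (b4 - 1) = Gi v (A - 1) (p - 1) * Gi v (B - 1) (r - 1)" using b3 by (simp add: Kc_def A_def B_def p_def r_def diff_diff_eq2)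
    have e1: "b3 - b4 = B - r" "b3 + b4 - N - 1 = p - r" "b4 - b3 + 1 = p - A"
      by (simp_all add: A_def B_def p_def r_def)
    have rel: "B = A + 1 - p + r" by (simp add: A_def B_def p_def r_def)
    show ?thesis
    proof (cases "B = 0 \<and> r = 0")
      case True
      then have "p = A + 1" using rel by simp
      then show ?thesis unfolding K0 K1 K2 K3 K4 using True A1 by (simp add: Gi_big Gi_neg1 Gi_neg2)
    next
      case False
      have hB: "Gi v B r = v powi (- r) * Gi v (B - 1) r + v powi (B - r) * Gi v (B - 1) (r - 1)"
        using Gi_form2'[of B r] False by blast
      have hA: "Gi v A p = v powi p * Gi v (A - 1) p + v powi (p - A) * Gi v (A - 1) (p - 1)"
        using Gi_form1[OF A1] by blast
      have ex: "p - A + (B - r) = 1" "B - r + p = 1 + A" "B - r + (p - A) = 1" using rel by simp_all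
      have ex4: "B + p - r = A + 1" using rel by simp
      show ?thesis unfolding K0 K1 K2 K3 K4 e1 hB hA
        by (simp only: distrib_left distrib_right left_diff_distrib right_diff_distrib mult.assoc Gi_vp vpadd2 ex)
           (simp add: algebra_simps ex4)
    qed
  qed
qed

lemma Kc_rec_R:
  assumes N: "0 \<le> N"
  shows "Kc N b3 b4 = v powi (- (b3 - b4)) * Kc (N - 1) b3 b4 + v powi (- (b3 + b4 - N - 1)) * Kc (N - 1) (b3 - 1) b4
     + v powi (- (b4 - b3 + 1)) * Kc (N - 1) (b3 - 1) (b4 - 1) - v powi (- 1) * Kc (N - 2) (b3 - 1) (b4 - 1)"
proof (cases "b3 \<le> 0")
  case True
  then show ?thesis by (simp add: Kc_def Gi_neg2)
next
  case False
  show ?thesis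
  proof (cases "b3 = 1")
    case b31: True
    show ?thesis
    proof (cases "b4 = 0")
      case True
      have "Gi v (N + 1) N = v powi N * Gi v N N + v powi (N - (N + 1)) * Gi v N (N - 1)"
        using Gi_form1[of "N+1" N] N by simp
      then show ?thesis using b31 True N by (simp add: Kc_def Gi_neg2 Gi_neg1 add.commute)
    next
      case False
      then show ?thesis using b31 N by (simp add: Kc_def Gi_neg2 Gi_neg1 Gi_0_left)
    qed
  next
    case False
    with \<open>\<not> b3 \<le> 0\<close> have b3: "2 \<le> b3" by simp
    define A where "A = b3 - 1"
    define B where "B = N + 1 - b4"
    define p where "p = b4"
    define r where "r = N + 1 - b3"
    have A1: "1 \<le> A" using b3 by (simp add: A_def)
    have K0: "Kc N b3 b4 = Gi v A p * Gi v B r" using b3 by (simp add: Kc_def A_def B_def p_def r_def diff_diff_eq2)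
    have K1: "Kc (N - 1) b3 b4 = Gi v A p * Gi v (B - 1) (r - 1)" using b3 by (simp add: Kc_def A_def B_def p_def r_def diff_diff_eq2)
    have K2: "Kc (N - 1) (b3 - 1) b4 = Gi v (A - 1) p * Gi v (B - 1) r"
    proof -
      show ?thesis using b3 by (simp add: Kc_def A_def B_def p_def r_def diff_diff_eq2)
    qed
    have K3: "Kc (N - 1) (b3 - 1) (b4 - 1) = Gi v (A - 1) (p - 1) * Gi v B r" using b3 by (simp add: Kc_def A_def B_def p_def r_def diff_diff_eq2)
    have K4: "Kc (N - 2) (b3 - 1) (b4 - 1) = Gi v (A - 1) (p - 1) * Gi v (B - 1) (r - 1)" using b3 by (simp add: Kc_def A_def B_def p_def r_def diff_diff_eq2)
    have e1: "- (b3 - b4) = r - B" "- (b3 + b4 - N - 1) = r - p" "- (b4 - b3 + 1) = A - p"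
      by (simp_all add: A_def B_def p_def r_def)
    have rel: "B = A + 1 - p + r" by (simp add: A_def B_def p_def r_def)
    show ?thesis
    proof (cases "B = 0 \<and> r = 0")
      case True
      then have "p = A + 1" using rel by simp
      then show ?thesis unfolding K0 K1 K2 K3 K4 using True A1 by (simp add: Gi_big Gi_neg1 Gi_neg2)
    next
      case False
      have hB: "Gi v B r = v powi r * Gi v (B - 1) r + v powi (r - B) * Gi v (B - 1) (r - 1)"
        using Gi_form1'[of B r] False by blast
      have hA: "Gi v A p = v powi (- p) * Gi v (A - 1) p + v powi (A - p) * Gi v (A - 1) (p - 1)"
        using Gi_form2[OF A1] by blast
      have ex: "A - p + (r - B) = - 1" "r - B + (A - p) = - 1" using rel by simp_all
      have ex4: "r - B - p = - A - 1" "A + r - B - p = - 1" "r - p - B = - A - 1" using rel by simp_all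
      show ?thesis unfolding K0 K1 K2 K3 K4 e1 hB hA
        by (simp only: distrib_left distrib_right left_diff_distrib right_diff_distrib mult.assoc Gi_vp vpadd2 ex)
           (simp add: algebra_simps ex4)
    qed
  qed
qed

definition MM :: "int \<times> int \<times> int \<times> int \<Rightarrow> 'k" where
  "MM x = (case x of (a1, a2, a3, a4) \<Rightarrow> Mk a1 a2 a3 a4)"

definition la :: "int \<times> int \<times> int \<times> int \<Rightarrow> int \<times> int \<times> int \<times> int \<Rightarrow> int" where
  "la x y = (case x of (a1, a2, a3, a4) \<Rightarrow> case y of (b1, b2, b3, b4) \<Rightarrow>
      - a1*b3 - a2*b4 + a3*b1 - 2*a3*b4 + a4*b2 + 2*a4*b3)"

lemma la_simp[simp]: "la (a1, a2, a3, a4) (b1, b2, b3, b4) = - a1*b3 - a2*b4 + a3*b1 - 2*a3*b4 + a4*b2 + 2*a4*b3"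
  by (simp add: la_def)
lemma MM_simp[simp]: "MM (a1, a2, a3, a4) = Mk a1 a2 a3 a4" by (simp add: MM_def)

lemma MM_mul: "MM x * MM y = v powi (la x y) * MM (x + y)"
  by (cases x; cases y) (simp add: Mkmul)

definition valS :: "(int \<times> int \<times> int \<times> int) set \<Rightarrow> (int \<times> int \<times> int \<times> int \<Rightarrow> 'k) \<Rightarrow> 'k" where
  "valS S c = (\<Sum>a\<in>S. c a * MM a)"

lemma valS_eq:
  assumes "finite S" "finite T" "\<And>b. c b \<noteq> 0 \<Longrightarrow> b \<in> S" "\<And>b. c b \<noteq> 0 \<Longrightarrow> b \<in> T"
  shows "valS S c = valS T c"
proof -
  have "valS S c = (\<Sum>a\<in>S \<inter> T. c a * MM a)"
    unfolding valS_def using assms by (intro sum.mono_neutral_right) auto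
  also have "\<dots> = valS T c"
    unfolding valS_def using assms by (intro sum.mono_neutral_left) auto
  finally show ?thesis .
qed

lemma valS_add: "valS S c + valS S d = valS S (\<lambda>a. c a + d a)"
  by (simp add: valS_def distrib_right sum.distrib)
lemma valS_diff: "valS S c - valS S d = valS S (\<lambda>a. c a - d a)"
  by (simp add: valS_def left_diff_distrib sum_subtractf)

lemma valS_lmult:
  assumes "\<And>a. a \<in> S \<Longrightarrow> cen (c a)"
  shows "MM z * valS S c = valS ((+) z ` S) (\<lambda>b. v powi la z (b - z) * c (b - z))"
proof -
  have "MM z * valS S c = (\<Sum>a\<in>S. (v powi la z a * c a) * MM (z + a))"
    unfolding valS_def sum_distrib_left
  proof (intro sum.cong refl)
    fix a assume a: "a \<in> S"
    have "MM z * (c a * MM a) = c a * (MM z * MM a)"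
      using cenD[OF assms[OF a], of "MM z"] by (metis mult.assoc)
    also have "\<dots> = (v powi la z a * c a) * MM (z + a)"
      unfolding MM_mul using cenD[OF cen_powi[OF cen_v], of "la z a" "c a"] by (metis mult.assoc)
    finally show "MM z * (c a * MM a) = (v powi la z a * c a) * MM (z + a)" .
  qed
  also have "\<dots> = valS ((+) z ` S) (\<lambda>b. v powi la z (b - z) * c (b - z))"
    unfolding valS_def by (subst sum.reindex) (auto simp: inj_on_def)
  finally show ?thesis .
qed

lemma valS_rmult:
  shows "valS S c * MM z = valS ((+) z ` S) (\<lambda>b. v powi la (b - z) z * c (b - z))"
proof -
  have "valS S c * MM z = (\<Sum>a\<in>S. (v powi la a z * c a) * MM (z + a))"
    unfolding valS_def sum_distrib_right
  proof (intro sum.cong refl)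
    fix a assume a: "a \<in> S"
    have "c a * MM a * MM z = c a * (v powi la a z * MM (z + a))"
      unfolding mult.assoc MM_mul by (simp add: add.commute)
    also have "\<dots> = (v powi la a z * c a) * MM (z + a)"
      using cenD[OF cen_powi[OF cen_v], of "la a z" "c a"] by (metis mult.assoc)
    finally show "c a * MM a * MM z = (v powi la a z * c a) * MM (z + a)" .
  qed
  also have "\<dots> = valS ((+) z ` S) (\<lambda>b. v powi la (b - z) z * c (b - z))"
    unfolding valS_def by (subst sum.reindex) (auto simp: inj_on_def)
  finally show ?thesis .
qed

definition cf :: "int \<Rightarrow> int \<times> int \<times> int \<times> int \<Rightarrow> 'k" where
  "cf N b = (case b of (b1, b2, b3, b4) \<Rightarrow>
     if b1 = 2 * b4 - N - 1 \<and> b2 = N + 2 - 2 * b3 then Kc N b3 b4 else 0)"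

definition SN :: "int \<Rightarrow> (int \<times> int \<times> int \<times> int) set" where
  "SN N = (\<lambda>(b3, b4). (2 * b4 - N - 1, N + 2 - 2 * b3, b3, b4)) ` ({0..N+2} \<times> {0..N+2})"

lemma finite_SN[simp]: "finite (SN N)" by (simp add: SN_def)

lemma cen_Kc[intro]: "cen (Kc N b3 b4)" unfolding Kc_def by (intro cen_add cen_mult cen_Gi) auto
lemma cen_cf[intro]: "cen (cf N b)" unfolding cf_def by (auto split: prod.splits)

lemma Gi_nz: "Gi v a b \<noteq> 0 \<Longrightarrow> 0 \<le> b \<and> b \<le> a"
  by (metis Gi_neg1 Gi_big not_le)
lemma Kc_nz: "Kc N b3 b4 \<noteq> 0 \<Longrightarrow> (b3 = 0 \<and> b4 = 0) \<or> (0 \<le> b4 \<and> b4 \<le> b3 - 1 \<and> b3 \<le> N + 1)"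
proof -
  assume K: "Kc N b3 b4 \<noteq> 0"
  show ?thesis
  proof (cases "b3 = 0 \<and> b4 = 0")
    case False
    with K have "Gi v (b3 - 1) b4 \<noteq> 0" "Gi v (N + 1 - b4) (N + 1 - b3) \<noteq> 0" by (auto simp: Kc_def)
    from Gi_nz[OF this(1)] Gi_nz[OF this(2)] show ?thesis by simp
  qed simp
qed

lemma cf_supp: "-2 \<le> N \<Longrightarrow> cf N b \<noteq> 0 \<Longrightarrow> b \<in> SN N"
proof -
  assume N: "-2 \<le> N" and c: "cf N b \<noteq> 0"
  obtain b1 b2 b3 b4 where b: "b = (b1, b2, b3, b4)" by (cases b) auto
  from c have P: "b1 = 2 * b4 - N - 1" "b2 = N + 2 - 2 * b3" and K: "Kc N b3 b4 \<noteq> 0"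
    by (auto simp: cf_def b split: if_splits)
  from Kc_nz[OF K] N have "(b3, b4) \<in> {0..N+2} \<times> {0..N+2}" by auto
  then show ?thesis unfolding SN_def b P by (auto intro: image_eqI[where x = "(b3, b4)"])
qed

definition "z1 = ((-1, 1, 0, 0) :: int \<times> int \<times> int \<times> int)"
definition "z2 = ((-1, -1, 1, 0) :: int \<times> int \<times> int \<times> int)"
definition "z3 = ((1, -1, 1, 1) :: int \<times> int \<times> int \<times> int)"
definition "w0 = ((0, 0, 1, 1) :: int \<times> int \<times> int \<times> int)"
definition "Zt = MM z1 + MM z2 + MM z3"
definition "Wt = MM w0"
definition "Xv N = valS (SN N) (cf N)"

lemma cf_recL_pt:
  assumes N: "0 \<le> N"
  shows "cf N b = v powi la z1 (b - z1) * cf (N - 1) (b - z1) + v powi la z2 (b - z2) * cf (N - 1) (b - z2)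
     + v powi la z3 (b - z3) * cf (N - 1) (b - z3) - v powi la w0 (b - w0) * cf (N - 2) (b - w0)"
proof -
  obtain b1 b2 b3 b4 where b: "b = (b1, b2, b3, b4)" by (cases b) auto
  show ?thesis
  proof (cases "b1 = 2 * b4 - N - 1 \<and> b2 = N + 2 - 2 * b3")
    case True
    then have P: "b1 = 2 * b4 - N - 1" "b2 = N + 2 - 2 * b3" by auto
    have l: "la z1 (b - z1) = b3 - b4" "la z2 (b - z2) = b3 + b4 - N - 1"
      "la z3 (b - z3) = b4 - b3 + 1" "la w0 (b - w0) = 1"
      by (simp_all add: b P z1_def z2_def z3_def w0_def algebra_simps)
    have c: "cf N b = Kc N b3 b4" "cf (N - 1) (b - z1) = Kc (N - 1) b3 b4"
      "cf (N - 1) (b - z2) = Kc (N - 1) (b3 - 1) b4" "cf (N - 1) (b - z3) = Kc (N - 1) (b3 - 1) (b4 - 1)"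
      "cf (N - 2) (b - w0) = Kc (N - 2) (b3 - 1) (b4 - 1)"
      by (simp_all add: cf_def b P z1_def z2_def z3_def w0_def algebra_simps)
    show ?thesis unfolding l c using Kc_rec_L[OF N, of b3 b4] by simp
  next
    case False
    then show ?thesis
      by (auto simp: cf_def b z1_def z2_def z3_def w0_def algebra_simps)
  qed
qed

lemma cf_recR_pt:
  assumes N: "0 \<le> N"
  shows "cf N b = v powi la (b - z1) z1 * cf (N - 1) (b - z1) + v powi la (b - z2) z2 * cf (N - 1) (b - z2)
     + v powi la (b - z3) z3 * cf (N - 1) (b - z3) - v powi la (b - w0) w0 * cf (N - 2) (b - w0)"
proof -
  obtain b1 b2 b3 b4 where b: "b = (b1, b2, b3, b4)" by (cases b) auto
  show ?thesis
  proof (cases "b1 = 2 * b4 - N - 1 \<and> b2 = N + 2 - 2 * b3")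
    case True
    then have P: "b1 = 2 * b4 - N - 1" "b2 = N + 2 - 2 * b3" by auto
    have l: "la (b - z1) z1 = - (b3 - b4)" "la (b - z2) z2 = - (b3 + b4 - N - 1)"
      "la (b - z3) z3 = - (b4 - b3 + 1)" "la (b - w0) w0 = - 1"
      by (simp_all add: b P z1_def z2_def z3_def w0_def algebra_simps)
    have c: "cf N b = Kc N b3 b4" "cf (N - 1) (b - z1) = Kc (N - 1) b3 b4"
      "cf (N - 1) (b - z2) = Kc (N - 1) (b3 - 1) b4" "cf (N - 1) (b - z3) = Kc (N - 1) (b3 - 1) (b4 - 1)"
      "cf (N - 2) (b - w0) = Kc (N - 2) (b3 - 1) (b4 - 1)"
      by (simp_all add: cf_def b P z1_def z2_def z3_def w0_def algebra_simps)
    show ?thesis unfolding l c using Kc_rec_R[OF N, of b3 b4] by simp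
  next
    case False
    then show ?thesis
      by (auto simp: cf_def b z1_def z2_def z3_def w0_def algebra_simps)
  qed
qed

lemma shift_supp: "(\<And>a. c a \<noteq> 0 \<Longrightarrow> a \<in> S) \<Longrightarrow> (x::'k) * c ((b::int \<times> int \<times> int \<times> int) - z) \<noteq> 0 \<Longrightarrow> b \<in> (+) z ` S"
proof -
  assume h: "\<And>a. c a \<noteq> 0 \<Longrightarrow> a \<in> S" and x: "x * c (b - z) \<noteq> 0"
  then have "c (b - z) \<noteq> 0" by auto
  then have "b - z \<in> S" by (rule h)
  moreover have "b = z + (b - z)" by simp
  ultimately show ?thesis by blast
qed

lemma Xv_U: "finite U \<Longrightarrow> SN N \<subseteq> U \<Longrightarrow> -2 \<le> N \<Longrightarrow> Xv N = valS U (cf N)"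
  unfolding Xv_def by (rule valS_eq) (auto dest: cf_supp)

lemma lmult_U:
  assumes U: "finite U" "(+) z ` SN M \<subseteq> U" and M: "-2 \<le> M"
  shows "MM z * Xv M = valS U (\<lambda>b. v powi la z (b - z) * cf M (b - z))"
proof -
  have "MM z * Xv M = valS ((+) z ` SN M) (\<lambda>b. v powi la z (b - z) * cf M (b - z))"
    unfolding Xv_def by (rule valS_lmult) auto
  also have "\<dots> = valS U (\<lambda>b. v powi la z (b - z) * cf M (b - z))"
  proof (rule valS_eq)
    fix b assume "v powi la z (b - z) * cf M (b - z) \<noteq> 0"
    then show "b \<in> (+) z ` SN M" using shift_supp[of "cf M" "SN M"] cf_supp[OF M] by blast
  next
    fix b assume "v powi la z (b - z) * cf M (b - z) \<noteq> 0"
    then have "b \<in> (+) z ` SN M" using shift_supp[of "cf M" "SN M"] cf_supp[OF M] by blast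
    then show "b \<in> U" using U by blast
  qed (use U in auto)
  finally show ?thesis .
qed

lemma rmult_U:
  assumes U: "finite U" "(+) z ` SN M \<subseteq> U" and M: "-2 \<le> M"
  shows "Xv M * MM z = valS U (\<lambda>b. v powi la (b - z) z * cf M (b - z))"
proof -
  have "Xv M * MM z = valS ((+) z ` SN M) (\<lambda>b. v powi la (b - z) z * cf M (b - z))"
    unfolding Xv_def by (rule valS_rmult)
  also have "\<dots> = valS U (\<lambda>b. v powi la (b - z) z * cf M (b - z))"
  proof (rule valS_eq)
    fix b assume "v powi la (b - z) z * cf M (b - z) \<noteq> 0"
    then show "b \<in> (+) z ` SN M" using shift_supp[of "cf M" "SN M"] cf_supp[OF M] by blast
  next
    fix b assume "v powi la (b - z) z * cf M (b - z) \<noteq> 0"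
    then have "b \<in> (+) z ` SN M" using shift_supp[of "cf M" "SN M"] cf_supp[OF M] by blast
    then show "b \<in> U" using U by blast
  qed (use U in auto)
  finally show ?thesis .
qed

lemma Xv_recL: "0 \<le> N \<Longrightarrow> Xv N = Zt * Xv (N - 1) - Wt * Xv (N - 2)"
proof -
  assume N: "0 \<le> N"
  define U where "U = SN N \<union> (+) z1 ` SN (N - 1) \<union> (+) z2 ` SN (N - 1) \<union> (+) z3 ` SN (N - 1) \<union> (+) w0 ` SN (N - 2)"
  have fU: "finite U" by (simp add: U_def)
  have s1: "(+) z1 ` SN (N - 1) \<subseteq> U" and s2: "(+) z2 ` SN (N - 1) \<subseteq> U"
    and s3: "(+) z3 ` SN (N - 1) \<subseteq> U" and s4: "(+) w0 ` SN (N - 2) \<subseteq> U" by (auto simp: U_def)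
  have m1: "-2 \<le> N - 1" and m2: "-2 \<le> N - 2" using N by simp_all
  have "Zt * Xv (N - 1) - Wt * Xv (N - 2) = MM z1 * Xv (N - 1) + MM z2 * Xv (N - 1) + MM z3 * Xv (N - 1) - MM w0 * Xv (N - 2)"
    by (simp add: Zt_def Wt_def distrib_right)
  also have "\<dots> = valS U (cf N)"
    unfolding lmult_U[OF fU s1 m1] lmult_U[OF fU s2 m1] lmult_U[OF fU s3 m1] lmult_U[OF fU s4 m2]
    using N by (simp add: U_def valS_add valS_diff cf_recL_pt[OF N, symmetric])
  also have "\<dots> = Xv N" using N by (intro Xv_U[symmetric] fU) (auto simp: U_def)
  finally show ?thesis by simp
qed

lemma Xv_recR: "0 \<le> N \<Longrightarrow> Xv N = Xv (N - 1) * Zt - Xv (N - 2) * Wt"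
proof -
  assume N: "0 \<le> N"
  define U where "U = SN N \<union> (+) z1 ` SN (N - 1) \<union> (+) z2 ` SN (N - 1) \<union> (+) z3 ` SN (N - 1) \<union> (+) w0 ` SN (N - 2)"
  have fU: "finite U" by (simp add: U_def)
  have s1: "(+) z1 ` SN (N - 1) \<subseteq> U" and s2: "(+) z2 ` SN (N - 1) \<subseteq> U"
    and s3: "(+) z3 ` SN (N - 1) \<subseteq> U" and s4: "(+) w0 ` SN (N - 2) \<subseteq> U" by (auto simp: U_def)
  have m1: "-2 \<le> N - 1" and m2: "-2 \<le> N - 2" using N by simp_all
  have "Xv (N - 1) * Zt - Xv (N - 2) * Wt = Xv (N - 1) * MM z1 + Xv (N - 1) * MM z2 + Xv (N - 1) * MM z3 - Xv (N - 2) * MM w0"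
    by (simp add: Zt_def Wt_def distrib_left)
  also have "\<dots> = valS U (cf N)"
    unfolding rmult_U[OF fU s1 m1] rmult_U[OF fU s2 m1] rmult_U[OF fU s3 m1] rmult_U[OF fU s4 m2]
    using N by (simp add: U_def valS_add valS_diff cf_recR_pt[OF N, symmetric])
  also have "\<dots> = Xv N" using N by (intro Xv_U[symmetric] fU) (auto simp: U_def)
  finally show ?thesis by simp
qed

lemma la_antisym: "la x y = - la y x"
  by (cases x; cases y) (simp add: algebra_simps)

lemma MM_comm: "MM z * MM a = v powi (2 * la z a) * (MM a * MM z)"
proof -
  have "MM a * MM z = v powi (- la z a) * MM (z + a)"
    using MM_mul[of a z] la_antisym[of a z] by (simp add: add.commute)
  then have "v powi (2 * la z a) * (MM a * MM z) = v powi (la z a) * MM (z + a)"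
    by (simp add: vpadd2 del: power_int_of_nat)
  then show ?thesis by (simp add: MM_mul)
qed

lemma valS_comm:
  assumes "\<And>a. a \<in> S \<Longrightarrow> cen (c a)" "\<And>a. a \<in> S \<Longrightarrow> c a \<noteq> 0 \<Longrightarrow> la z a = k"
  shows "MM z * valS S c = v powi (2 * k) * (valS S c * MM z)"
  unfolding valS_def sum_distrib_left sum_distrib_right
proof (intro sum.cong refl)
  fix a assume a: "a \<in> S"
  show "MM z * (c a * MM a) = v powi (2 * k) * (c a * MM a * MM z)"
  proof (cases "c a = 0")
    case False
    have "MM z * (c a * MM a) = c a * (MM z * MM a)"
      using cenD[OF assms(1)[OF a], of "MM z"] by (metis mult.assoc)
    also have "\<dots> = c a * (v powi (2 * k) * (MM a * MM z))"
      using MM_comm[of z a] assms(2)[OF a False] by simp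
    also have "\<dots> = v powi (2 * k) * (c a * MM a * MM z)"
      using cenD[OF cen_powi[OF cen_v], of "2 * k" "c a"] by (metis mult.assoc)
    finally show ?thesis .
  qed simp
qed

lemma Xv_comm: "-2 \<le> N \<Longrightarrow> MM (0, 0, c, d) * Xv N = v powi (2 * (d * (N + 2) - c * (N + 1))) * (Xv N * MM (0, 0, c, d))"
  unfolding Xv_def
proof (rule valS_comm)
  fix a assume "a \<in> SN N" "cf N a \<noteq> 0"
  moreover obtain a1 a2 a3 a4 where a: "a = (a1, a2, a3, a4)" by (cases a) auto
  ultimately have P: "a1 = 2 * a4 - N - 1" "a2 = N + 2 - 2 * a3" by (auto simp: cf_def split: if_splits)
  show "la (0, 0, c, d) a = d * (N + 2) - c * (N + 1)"
    unfolding a la_simp P by algebra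
qed auto

lemma Wt_Xv: "-2 \<le> N \<Longrightarrow> Xv N * Wt = v powi (- 2) * (Wt * Xv N)"
proof -
  assume N: "-2 \<le> N"
  have "Wt * Xv N = v powi 2 * (Xv N * Wt)"
    using Xv_comm[OF N, of 1 1] by (simp add: Wt_def w0_def)
  then have "v powi (-2) * (Wt * Xv N) = v powi (-2) * (v powi 2 * (Xv N * Wt))" by simp
  also have "\<dots> = Xv N * Wt" by (simp only: vpadd2) simp
  finally show ?thesis by simp
qed

lemma Mk_vp: "Mk a b c d * (v powi k * y) = v powi k * (Mk a b c d * y)"
  using vc_pow[of k "Mk a b c d"] by (metis mult.assoc)

lemma Xv_m2: "Xv (-2) = Mk 1 0 0 0"
  by (simp add: Xv_def SN_def valS_def cf_def Kc_def Gi_neg2)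

lemma Xv_m1: "Xv (-1) = Mk 0 1 0 0"
proof -
  have "Xv (-1) = valS {(0, 1, 0, 0)} (cf (-1))"
    unfolding Xv_def
  proof (rule valS_eq)
    fix b assume "cf (-1) b \<noteq> 0"
    moreover obtain b1 b2 b3 b4 where b: "b = (b1, b2, b3, b4)" by (cases b) auto
    ultimately have P: "b1 = 2 * b4" "b2 = 1 - 2 * b3" and K: "Kc (-1) b3 b4 \<noteq> 0"
      by (auto simp: cf_def split: if_splits)
    from Kc_nz[OF K] have "b3 = 0 \<and> b4 = 0" by auto
    then show "b \<in> {(0, 1, 0, 0)}" using P b by simp
  qed (use cf_supp[of "-1"] in auto)
  also have "\<dots> = Mk 0 1 0 0" by (simp add: valS_def cf_def Kc_def Gi_neg2)
  finally show ?thesis .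
qed

lemma Xv_0L: "Xv 0 = Zt * Mk 0 1 0 0 - Wt * Mk 1 0 0 0"
  using Xv_recL[of 0] by (simp add: Xv_m1 Xv_m2)
lemma Xv_0R: "Xv 0 = Mk 0 1 0 0 * Zt - Mk 1 0 0 0 * Wt"
  using Xv_recR[of 0] by (simp add: Xv_m1 Xv_m2)

lemma Wt_Mk: "Wt * Mk 0 0 a b = v powi (2 * a - 2 * b) * Mk 0 0 (a + 1) (b + 1)"
  by (simp add: Wt_def w0_def Mkmul algebra_simps)

lemma E_L: "-2 \<le> N \<Longrightarrow> Xv N * Xv (N + 2) - Xv (N + 1) * Xv (N + 1) = v powi (- 1) * Mk 0 0 (N + 3) (N + 2)"
proof (induction N rule: int_ge_induct)
  case base
  show ?case
    by (simp add: Xv_0L Xv_m1 Xv_m2 Zt_def Wt_def z1_def z2_def z3_def w0_def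
        distrib_left distrib_right right_diff_distrib left_diff_distrib Mkmul mult.assoc Mk_vp vpadd2 del: power_int_of_nat)
next
  case (step N)
  have L3: "Xv (N + 1 + 2) = Zt * Xv (N + 2) - Wt * Xv (N + 1)"
    using Xv_recL[of "N + 3"] step.hyps by (simp add: algebra_simps)
  have R2: "Xv (N + 2) = Xv (N + 1) * Zt - Xv N * Wt"
    using Xv_recR[of "N + 2"] step.hyps by (simp add: algebra_simps)
  have sq: "Xv (N + 2) * Xv (N + 2) = (Xv (N + 1) * Zt - Xv N * Wt) * Xv (N + 2)"
    by (rule arg_cong[where f = "\<lambda>x. x * Xv (N + 2)"]) (rule R2)
  have W0: "Xv N * Wt = v powi (- 2) * (Wt * Xv N)" using Wt_Xv step.hyps by simp
  have W1: "Xv (N + 1) * Wt = v powi (- 2) * (Wt * Xv (N + 1))" using Wt_Xv step.hyps by simp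
  have "Xv (N + 1) * Xv (N + 1 + 2) - Xv (N + 1 + 1) * Xv (N + 1 + 1)
      = Xv N * Wt * Xv (N + 2) - Xv (N + 1) * Wt * Xv (N + 1)"
    unfolding L3 using sq by (simp add: algebra_simps)
  also have "\<dots> = v powi (- 2) * (Wt * (Xv N * Xv (N + 2) - Xv (N + 1) * Xv (N + 1)))"
    unfolding W0 W1 by (simp add: algebra_simps)
  also have "\<dots> = v powi (- 2) * (Wt * (v powi (- 1) * Mk 0 0 (N + 3) (N + 2)))"
    using step.IH by simp
  also have "\<dots> = v powi (- 1) * Mk 0 0 (N + 1 + 3) (N + 1 + 2)"
  proof -
    have "Wt * (v powi (- 1) * Mk 0 0 (N + 3) (N + 2)) = v powi (- 1) * (Wt * Mk 0 0 (N + 3) (N + 2))"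
      using vc_pow[of "- 1" Wt] by (metis mult.assoc)
    also have "\<dots> = v powi (- 1) * (v powi 2 * Mk 0 0 (N + 1 + 3) (N + 1 + 2))"
      unfolding Wt_Mk by (simp add: algebra_simps)
    finally show ?thesis by (simp only: vpadd2) simp
  qed
  finally show ?case .
qed

lemma E_R: "-2 \<le> N \<Longrightarrow> Xv (N + 2) * Xv N - Xv (N + 1) * Xv (N + 1) = v * Mk 0 0 (N + 3) (N + 2)"
proof (induction N rule: int_ge_induct)
  case base
  show ?case
    by (simp add: Xv_0R Xv_m1 Xv_m2 Zt_def Wt_def z1_def z2_def z3_def w0_def
        distrib_left distrib_right right_diff_distrib left_diff_distrib Mkmul mult.assoc Mk_vp vpadd2 del: power_int_of_nat)
next
  case (step N)
  have L3: "Xv (N + 1 + 2) = Xv (N + 2) * Zt - Xv (N + 1) * Wt"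
    using Xv_recR[of "N + 3"] step.hyps by (simp add: algebra_simps)
  have R2: "Xv (N + 2) = Zt * Xv (N + 1) - Wt * Xv N"
    using Xv_recL[of "N + 2"] step.hyps by (simp add: algebra_simps)
  have sq: "Xv (N + 2) * Xv (N + 2) = Xv (N + 2) * (Zt * Xv (N + 1) - Wt * Xv N)"
    by (rule arg_cong[where f = "\<lambda>x. Xv (N + 2) * x"]) (rule R2)
  have W2: "Xv (N + 2) * Wt = v powi (- 2) * (Wt * Xv (N + 2))" using Wt_Xv step.hyps by simp
  have W1: "Xv (N + 1) * Wt = v powi (- 2) * (Wt * Xv (N + 1))" using Wt_Xv step.hyps by simp
  have "Xv (N + 1 + 2) * Xv (N + 1) - Xv (N + 1 + 1) * Xv (N + 1 + 1)
      = Xv (N + 2) * Wt * Xv N - Xv (N + 1) * Wt * Xv (N + 1)"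
    unfolding L3 using sq by (simp add: algebra_simps)
  also have "\<dots> = v powi (- 2) * (Wt * (Xv (N + 2) * Xv N - Xv (N + 1) * Xv (N + 1)))"
    unfolding W2 W1 by (simp add: algebra_simps)
  also have "\<dots> = v powi (- 2) * (Wt * (v * Mk 0 0 (N + 3) (N + 2)))"
    using step.IH by simp
  also have "\<dots> = v * Mk 0 0 (N + 1 + 3) (N + 1 + 2)"
  proof -
    have "Wt * (v * Mk 0 0 (N + 3) (N + 2)) = v * (Wt * Mk 0 0 (N + 3) (N + 2))"
      using vc[of Wt] by (metis mult.assoc)
    also have "\<dots> = v * (v powi 2 * Mk 0 0 (N + 1 + 3) (N + 1 + 2))"
      unfolding Wt_Mk by (simp add: algebra_simps)
    finally have "Wt * (v * Mk 0 0 (N + 3) (N + 2)) = v powi 1 * (v powi 2 * Mk 0 0 (N + 1 + 3) (N + 1 + 2))" by simp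
    then show ?thesis by (simp only: vpadd2) simp
  qed
  finally show ?case .
qed

lemma MM_inv: "MM a * MM (- a) = 1"
  using MM_mul[of a "- a"] by (cases a) (simp add: Mk0 algebra_simps)
lemma MM_nz: "MM a \<noteq> 0"
  using MM_inv[of a] by auto
lemma Mk_nz: "Mk a b c d \<noteq> 0"
  using MM_nz[of "(a, b, c, d)"] by simp

lemma vander:
  fixes M :: 'k and Y :: "'i \<Rightarrow> 'k" and mu :: "'i \<Rightarrow> 'k"
  assumes "finite J" "i0 \<notin> J" "M \<noteq> 0" "\<And>i. i \<in> insert i0 J \<Longrightarrow> cen (mu i)"
    "\<And>i. i \<in> insert i0 J \<Longrightarrow> M * Y i = mu i * (Y i * M)"
    "\<And>i. i \<in> J \<Longrightarrow> mu i \<noteq> mu i0" "(\<Sum>i\<in>insert i0 J. Y i) = 0"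
  shows "Y i0 = 0"
  using assms
proof (induction J arbitrary: Y rule: finite_induct)
  case empty then show ?case by simp
next
  case (insert j J)
  define I where "I = insert i0 (insert j J)"
  have fI: "finite I" using insert by (simp add: I_def)
  have sum0: "(\<Sum>i\<in>I. Y i) = 0" using insert.prems by (simp add: I_def)
  have "(\<Sum>i\<in>I. mu i * Y i) * M = (\<Sum>i\<in>I. M * Y i)"
    unfolding sum_distrib_right using insert.prems(4) by (intro sum.cong) (auto simp: I_def mult.assoc)
  also have "\<dots> = M * (\<Sum>i\<in>I. Y i)" by (simp add: sum_distrib_left)
  finally have A: "(\<Sum>i\<in>I. mu i * Y i) = 0" using sum0 insert.prems(2) by simp
  have B: "(\<Sum>i\<in>I. mu j * Y i) = 0" using sum0 by (simp add: sum_distrib_left[symmetric])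
  define Y' where "Y' i = (mu i - mu j) * Y i" for i
  have C: "(\<Sum>i\<in>I. Y' i) = 0" using A B unfolding Y'_def
    by (simp add: left_diff_distrib sum_subtractf)
  have ji: "j \<notin> insert i0 J" using insert by auto
  have "I = insert j (insert i0 J)" by (auto simp: I_def)
  then have "(\<Sum>i\<in>I. Y' i) = Y' j + (\<Sum>i\<in>insert i0 J. Y' i)"
    using insert.hyps ji by simp
  then have D: "(\<Sum>i\<in>insert i0 J. Y' i) = 0" using C by (simp add: Y'_def)
  have "Y' i0 = 0"
  proof (rule insert.IH)
    show "i0 \<notin> J" using insert by auto
    show "M \<noteq> 0" by fact
    show "\<And>i. i \<in> insert i0 J \<Longrightarrow> cen (mu i)" using insert.prems by auto
    show "\<And>i. i \<in> J \<Longrightarrow> mu i \<noteq> mu i0" using insert.prems by auto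
    show "(\<Sum>i\<in>insert i0 J. Y' i) = 0" by fact
    fix i assume i: "i \<in> insert i0 J"
    have ci: "cen (mu i)" "cen (mu j)" using insert.prems(3) i by auto
    have "M * Y' i = (mu i - mu j) * (M * Y i)"
      unfolding Y'_def using cenD[OF cen_diff[OF ci], of M] by (metis mult.assoc)
    also have "\<dots> = (mu i - mu j) * (mu i * (Y i * M))" using insert.prems(4) i by auto
    also have "\<dots> = mu i * (Y' i * M)"
      unfolding Y'_def using cenD[OF cen_diff[OF ci], of "mu i"] by (metis mult.assoc)
    finally show "M * Y' i = mu i * (Y' i * M)" .
  qed
  moreover have "mu i0 - mu j \<noteq> 0" using insert.prems(5)[of j] by auto
  ultimately show ?case by (simp add: Y'_def)
qed

lemma Xv_nz: "-2 \<le> N \<Longrightarrow> Xv N \<noteq> 0"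
proof
  assume N: "-2 \<le> N" and X0: "Xv N = 0"
  define g where "g = (- N - 1, N + 2, 0::int, 0::int)"
  define J where "J = {a \<in> SN N. fst (snd (snd a)) \<noteq> 0}"
  define Y where "Y a = cf N a * MM a" for a
  define mu :: "int \<times> int \<times> int \<times> int \<Rightarrow> 'k" where "mu a = v powi (- 2 * fst (snd (snd a)))" for a
  have gS: "g \<in> SN N" using N unfolding g_def SN_def by (auto intro!: image_eqI[where x = "(0, 0)"])
  have fJ: "finite J" by (simp add: J_def)
  have gJ: "g \<notin> J" by (simp add: J_def g_def)
  have "Xv N = (\<Sum>a\<in>insert g J. Y a)"
    unfolding Xv_def valS_def Y_def
  proof (rule sum.mono_neutral_right)
    show "insert g J \<subseteq> SN N" using gS by (auto simp: J_def)
    show "\<forall>a\<in>SN N - insert g J. cf N a * MM a = 0"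
    proof
      fix a assume a: "a \<in> SN N - insert g J"
      obtain a1 a2 a3 a4 where aa: "a = (a1, a2, a3, a4)" by (cases a) auto
      have "a3 = 0" using a aa by (auto simp: J_def)
      moreover have "cf N a \<noteq> 0 \<Longrightarrow> False"
      proof -
        assume c: "cf N a \<noteq> 0"
        then have P: "a1 = 2 * a4 - N - 1" "a2 = N + 2 - 2 * a3" and K: "Kc N a3 a4 \<noteq> 0"
          by (auto simp: cf_def aa split: if_splits)
        from Kc_nz[OF K] \<open>a3 = 0\<close> have "a4 = 0" by auto
        with P \<open>a3 = 0\<close> have "a = g" by (simp add: aa g_def)
        with a show False by simp
      qed
      ultimately show "cf N a * MM a = 0" by auto
    qed
  qed simp
  with X0 have sum0: "(\<Sum>a\<in>insert g J. Y a) = 0" by simp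
  have "Y g = 0"
  proof (rule vander[OF fJ gJ MM_nz[of "(1, 0, 0, 0)"], where mu = mu])
    show "\<And>i. i \<in> insert g J \<Longrightarrow> cen (mu i)" by (auto simp: mu_def)
    show "(\<Sum>i\<in>insert g J. Y i) = 0" by fact
    fix i assume "i \<in> insert g J"
    obtain a1 a2 a3 a4 where aa: "i = (a1, a2, a3, a4)" by (cases i) auto
    have e: "2 * la (1, 0, 0, 0) i = - 2 * fst (snd (snd i))" by (simp add: aa)
    have c1: "MM (1, 0, 0, 0) * MM i = mu i * (MM i * MM (1, 0, 0, 0))"
      unfolding mu_def e[symmetric] by (rule MM_comm)
    have i1: "MM (1, 0, 0, 0) * cf N i = cf N i * MM (1, 0, 0, 0)"
      using cenD[OF cen_cf, of N i "MM (1, 0, 0, 0)"] by simp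
    have i2: "cf N i * mu i = mu i * cf N i"
      using cenD[OF cen_powi[OF cen_v], of "- 2 * fst (snd (snd i))" "cf N i"] by (simp add: mu_def)
    have "MM (1, 0, 0, 0) * Y i = cf N i * (MM (1, 0, 0, 0) * MM i)"
      unfolding Y_def by (simp only: mult.assoc[symmetric] i1)
    also have "\<dots> = cf N i * (mu i * (MM i * MM (1, 0, 0, 0)))" by (simp only: c1)
    also have "\<dots> = mu i * (Y i * MM (1, 0, 0, 0))"
      unfolding Y_def by (simp only: mult.assoc[symmetric] i2)
    finally show "MM (1, 0, 0, 0) * Y i = mu i * (Y i * MM (1, 0, 0, 0))" .
  next
    fix i assume i: "i \<in> J"
    have "fst (snd (snd i)) \<noteq> 0" using i by (simp add: J_def)
    then have "v powi (- 2 * fst (snd (snd i))) \<noteq> 1" by (intro vpow_ne1) simp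
    then show "mu i \<noteq> mu g" by (simp add: mu_def g_def)
  qed
  moreover have "cf N g = 1" by (simp add: g_def cf_def Kc_def Gi_neg2)
  ultimately show False using MM_nz[of g] by (simp add: Y_def)
qed

end



definition al :: "nat \<Rightarrow> int" where "al s = (if even s then int s - 1 else int s)"
definition be :: "nat \<Rightarrow> int" where "be s = (if even s then int s else int s - 1)"

definition Bs :: "nat \<Rightarrow> nat \<Rightarrow> nat \<Rightarrow> int" where
  "Bs s i j = (if even s then
     (if i = 0 \<and> j = 1 then 2 else if i = 1 \<and> j = 0 then -2 else if i = 2 \<and> j = 0 then int s + 1
      else if i = 2 \<and> j = 1 then - int s else if i = 3 \<and> j = 0 then int s else if i = 3 \<and> j = 1 then 1 - int s else 0)
   else
     (if i = 0 \<and> j = 1 then -2 else if i = 1 \<and> j = 0 then 2 else if i = 2 \<and> j = 0 then - int s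
      else if i = 2 \<and> j = 1 then int s + 1 else if i = 3 \<and> j = 0 then 1 - int s else if i = 3 \<and> j = 1 then int s else 0))"

definition Ls :: "nat \<Rightarrow> nat \<Rightarrow> nat \<Rightarrow> int" where
  "Ls s i j = (if i = 0 \<and> j = 2 then al s else if i = 0 \<and> j = 3 then - al s - 1
     else if i = 1 \<and> j = 2 then be s else if i = 1 \<and> j = 3 then - be s - 1
     else if i = 2 \<and> j = 3 then -2 else if i = 2 \<and> j = 0 then - al s else if i = 3 \<and> j = 0 then al s + 1
     else if i = 2 \<and> j = 1 then - be s else if i = 3 \<and> j = 1 then be s + 1 else if i = 3 \<and> j = 2 then 2 else 0)"

lemma Bs0: "B0 = Bs 0"
  by (intro ext) (simp add: B0_def Bs_def)
lemma Ls0: "L0 = Ls 0"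
  by (intro ext) (auto simp: L0_def Ls_def al_def be_def)

lemma nat_cases4: obtains "i = 0" | "i = 1" | "i = 2" | "i = 3" | "4 \<le> (i::nat)" by linarith

lemma Bs_step: "mutB (s mod 2) (Bs s) = Bs (Suc s)"
proof (intro ext)
  fix i j
  show "mutB (s mod 2) (Bs s) i j = Bs (Suc s) i j"
  proof (cases "even s")
    case True
    then have m: "s mod 2 = 0" by presburger
    show ?thesis using True
      by (cases i rule: nat_cases4; cases j rule: nat_cases4)
         (simp_all add: m mutB_def Bs_def abs_if max_def)
  next
    case False
    then have m: "s mod 2 = 1" by presburger
    have s1: "1 \<le> s" using False by (cases s) auto
    show ?thesis using False s1
      by (cases i rule: nat_cases4; cases j rule: nat_cases4)
         (simp_all add: m mutB_def Bs_def abs_if max_def)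
  qed
qed

lemma sum4: "(\<Sum>a<4. f a) = f 0 + f 1 + f 2 + (f (3::nat) :: int)"
  by (simp add: eval_nat_numeral)

lemma Ls_step: "mutL (Bs s) (s mod 2) (Ls s) = Ls (Suc s)"
proof (intro ext)
  fix i j
  show "mutL (Bs s) (s mod 2) (Ls s) i j = Ls (Suc s) i j"
  proof (cases "even s")
    case True
    then have m: "s mod 2 = 0" by presburger
    show ?thesis using True
      by (cases i rule: nat_cases4; cases j rule: nat_cases4)
         (simp_all add: m mutL_def sum4 mutE_def Bs_def Ls_def al_def be_def abs_if max_def)
  next
    case False
    then have m: "s mod 2 = 1" by presburger
    have s1: "1 \<le> s" using False by (cases s) auto
    show ?thesis using False s1
      by (cases i rule: nat_cases4; cases j rule: nat_cases4)
         (simp_all add: m mutL_def sum4 mutE_def Bs_def Ls_def al_def be_def abs_if max_def)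
  qed
qed




context kron begin

lemma Mk_pow: "Mk a b c d ^ n = Mk (int n * a) (int n * b) (int n * c) (int n * d)"
proof (induction n)
  case 0 then show ?case by (simp add: Mk0)
next
  case (Suc n)
  have "Mk a b c d ^ Suc n = Mk a b c d * Mk (int n * a) (int n * b) (int n * c) (int n * d)"
    using Suc by simp
  also have "\<dots> = Mk (int (Suc n) * a) (int (Suc n) * b) (int (Suc n) * c) (int (Suc n) * d)"
    by (simp add: Mkmul algebra_simps)
  finally show ?case .
qed

definition Xcl :: "nat \<Rightarrow> nat \<Rightarrow> 'k" where
  "Xcl s i = (if i = 0 then (if even s then Xv (int s - 2) else Xv (int s - 1))
     else if i = 1 then (if even s then Xv (int s - 1) else Xv (int s - 2))
     else if i = 2 then Mk 0 0 1 0 else Mk 0 0 0 1)"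

lemma sum_lt_simps: "(\<Sum>l<(0::nat). f l) = (0::int)" "(\<Sum>l<(1::nat). f l) = f 0"
  "(\<Sum>l<(2::nat). f l) = f 0 + f 1" "(\<Sum>l<(3::nat). f l) = f 0 + f 1 + f 2"
  by (simp_all add: eval_nat_numeral)

lemma seed_even:
  assumes ev: "even s"
  shows "seedM v (Xcl s) (Ls s) (\<lambda>i. (if i = 0 then -1 else 0) + max 0 (Bs s i 0))
       + seedM v (Xcl s) (Ls s) (\<lambda>i. (if i = 0 then -1 else 0) + max 0 (- Bs s i 0)) = Xv (int s)"
proof -
  define X0 where "X0 = Xv (int s - 2)"
  define X1 where "X1 = Xv (int s - 1)"
  define M' where "M' = Mk 0 0 (int s + 1) (int s)"
  have x0: "Xcl s 0 = X0" "Xcl s 1 = X1" "Xcl s 2 = Mk 0 0 1 0" "Xcl s 3 = Mk 0 0 0 1"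
    using ev by (simp_all add: Xcl_def X0_def X1_def)
  have e1: "(\<Sum>m<4. \<Sum>l<m. ((if l = 0 then -1 else 0) + max 0 (Bs s l 0)) * ((if m = 0 then -1 else 0) + max 0 (Bs s m 0)) * Ls s m l)
      = 2 * int s * int s + 2 * int s - 1"
    using ev by (simp add: sum4 sum_lt_simps Bs_def Ls_def al_def be_def algebra_simps)
  have e2: "(\<Sum>m<4. \<Sum>l<m. ((if l = 0 then -1 else 0) + max 0 (- Bs s l 0)) * ((if m = 0 then -1 else 0) + max 0 (- Bs s m 0)) * Ls s m l)
      = 0"
    using ev by (simp add: sum4 sum_lt_simps Bs_def Ls_def al_def be_def algebra_simps)
  have b1: "Bs s 0 0 = 0" "Bs s 1 0 = -2" "Bs s 2 0 = int s + 1" "Bs s 3 0 = int s" using ev by (simp_all add: Bs_def)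
  have y: "Mk 0 0 1 0 powi (int s + 1) * Mk 0 0 0 1 powi (int s) = v powi (- 2 * int s * int s - 2 * int s) * M'"
  proof -
    have "Mk 0 0 1 0 powi (int s + 1) = Mk 0 0 1 0 ^ (s + 1)"
      by (metis of_nat_Suc add.commute power_int_of_nat Suc_eq_plus1)
    moreover have "v powi (- (int s * 2) - int s * (int s * 2)) = v powi (- (int s * (int s * 2)) - int s * 2)"
      by (rule arg_cong[where f = "power_int v"]) simp
    ultimately show ?thesis by (simp add: Mk_pow Mkmul M'_def algebra_simps)
  qed
  have X0nz: "X0 \<noteq> 0" unfolding X0_def by (rule Xv_nz) simp
  have E: "X0 * Xv (int s) - X1 * X1 = v powi (- 1) * M'"
  proof -
    have a: "int s - 2 + 2 = int s" "int s - 2 + 1 = int s - 1" "int s - 2 + 3 = int s + 1" by simp_all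
    have pr: "-2 \<le> int s - 2" by simp
    note E0 = E_L[OF pr]
    have E1: "Xv (int s - 2) * Xv (int s) - Xv (int s - 1) * Xv (int s - 1) = v powi (- 1) * Mk 0 0 (int s + 1) (int s)" using E0 unfolding a .
    show ?thesis using E1 by (simp only: X0_def X1_def M'_def)
  qed
  have h: "X0 * Xv (int s) = v powi (- 1) * M' + X1 * X1" using E by (simp only: diff_eq_eq)
  have Xs: "Xv (int s) = inverse X0 * (X1 * X1 + v powi (- 1) * M')"
  proof -
    have "Xv (int s) = inverse X0 * (X0 * Xv (int s))" using X0nz by (simp add: mult.assoc[symmetric])
    then show ?thesis unfolding h by (simp add: add.commute)
  qed
  have "seedM v (Xcl s) (Ls s) (\<lambda>i. (if i = 0 then -1 else 0) + max 0 (Bs s i 0))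
       = v powi (2 * int s * int s + 2 * int s - 1) * inverse X0 * (Mk 0 0 1 0 powi (int s + 1) * Mk 0 0 0 1 powi (int s))"
    unfolding seedM_def e1 using b1 x0 by (simp add: mult.assoc power_int_minus)
  also have "\<dots> = inverse X0 * (v powi (- 1) * M')"
  proof -
    have c: "v powi (2 * int s * int s + 2 * int s - 1) * inverse X0 = inverse X0 * v powi (2 * int s * int s + 2 * int s - 1)"
      by (rule vc_pow)
    have ex: "2 * (int s * int s) + 2 * int s - 1 + (- 2 * (int s * int s) - 2 * int s) = - 1" by simp
    show ?thesis unfolding y c by (simp only: mult.assoc vpadd2 ex)
  qed
  finally have s1: "seedM v (Xcl s) (Ls s) (\<lambda>i. (if i = 0 then -1 else 0) + max 0 (Bs s i 0)) = inverse X0 * (v powi (- 1) * M')" .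
  have s2: "seedM v (Xcl s) (Ls s) (\<lambda>i. (if i = 0 then -1 else 0) + max 0 (- Bs s i 0)) = inverse X0 * (X1 * X1)"
    unfolding seedM_def e2 using b1 x0 by (simp add: mult.assoc power_int_minus power2_eq_square)
  show ?thesis unfolding s1 s2 Xs by (simp add: distrib_left add.commute)
qed

lemma seed_odd:
  assumes od: "odd s"
  shows "seedM v (Xcl s) (Ls s) (\<lambda>i. (if i = 1 then -1 else 0) + max 0 (Bs s i 1))
       + seedM v (Xcl s) (Ls s) (\<lambda>i. (if i = 1 then -1 else 0) + max 0 (- Bs s i 1)) = Xv (int s)"
proof -
  have s1: "1 \<le> s" using od by (cases s) auto
  define X0 where "X0 = Xv (int s - 1)"
  define X1 where "X1 = Xv (int s - 2)"
  define M' where "M' = Mk 0 0 (int s + 1) (int s)"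
  have x0: "Xcl s 0 = X0" "Xcl s 1 = X1" "Xcl s 2 = Mk 0 0 1 0" "Xcl s 3 = Mk 0 0 0 1"
    using od by (simp_all add: Xcl_def X0_def X1_def)
  have e1: "(\<Sum>m<4. \<Sum>l<m. ((if l = 1 then -1 else 0) + max 0 (Bs s l 1)) * ((if m = 1 then -1 else 0) + max 0 (Bs s m 1)) * Ls s m l)
      = 2 * int s * int s + 2 * int s - 1"
    using od s1 by (simp add: sum4 sum_lt_simps Bs_def Ls_def al_def be_def algebra_simps)
  have e2: "(\<Sum>m<4. \<Sum>l<m. ((if l = 1 then -1 else 0) + max 0 (- Bs s l 1)) * ((if m = 1 then -1 else 0) + max 0 (- Bs s m 1)) * Ls s m l)
      = 0"
    using od s1 by (simp add: sum4 sum_lt_simps Bs_def Ls_def al_def be_def algebra_simps)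
  have b1: "Bs s 0 1 = -2" "Bs s 1 1 = 0" "Bs s 2 1 = int s + 1" "Bs s 3 1 = int s" using od by (simp_all add: Bs_def)
  have y: "Mk 0 0 1 0 powi (int s + 1) * Mk 0 0 0 1 powi (int s) = v powi (- 2 * int s * int s - 2 * int s) * M'"
  proof -
    have "Mk 0 0 1 0 powi (int s + 1) = Mk 0 0 1 0 ^ (s + 1)"
      by (metis of_nat_Suc add.commute power_int_of_nat Suc_eq_plus1)
    moreover have "v powi (- (int s * 2) - int s * (int s * 2)) = v powi (- (int s * (int s * 2)) - int s * 2)"
      by (rule arg_cong[where f = "power_int v"]) simp
    ultimately show ?thesis by (simp add: Mk_pow Mkmul M'_def algebra_simps)
  qed
  have X1nz: "X1 \<noteq> 0" unfolding X1_def by (rule Xv_nz) simp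
  have E: "Xv (int s) * X1 - X0 * X0 = v * M'"
  proof -
    have a: "int s - 2 + 2 = int s" "int s - 2 + 1 = int s - 1" "int s - 2 + 3 = int s + 1" by simp_all
    have pr: "-2 \<le> int s - 2" by simp
    note E0 = E_R[OF pr]
    have E1: "Xv (int s) * Xv (int s - 2) - Xv (int s - 1) * Xv (int s - 1) = v * Mk 0 0 (int s + 1) (int s)"
      using E0 unfolding a .
    show ?thesis using E1 by (simp only: X0_def X1_def M'_def)
  qed
  have h: "Xv (int s) * X1 = v * M' + X0 * X0" using E by (simp only: diff_eq_eq)
  have Xs: "Xv (int s) = (v * M' + X0 * X0) * inverse X1"
  proof -
    have "Xv (int s) = (Xv (int s) * X1) * inverse X1" using X1nz by (simp add: mult.assoc)
    then show ?thesis unfolding h .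
  qed
  have cm: "M' * X1 = v powi 2 * (X1 * M')"
  proof -
    have pr: "-2 \<le> int s - 2" by simp
    have ex: "2 * (int s * (int s - 2 + 2) - (int s + 1) * (int s - 2 + 1)) = 2" by (simp add: algebra_simps)
    show ?thesis using Xv_comm[OF pr, of "int s + 1" "int s"] unfolding ex by (simp add: M'_def X1_def)
  qed
  have cm2: "inverse X1 * M' = v powi 2 * (M' * inverse X1)"
  proof -
    have "inverse X1 * M' = inverse X1 * (M' * X1) * inverse X1" using X1nz by (simp add: mult.assoc)
    also have "\<dots> = inverse X1 * (v powi 2 * (X1 * M')) * inverse X1" by (simp only: cm)
    also have "\<dots> = v powi 2 * (inverse X1 * X1 * M' * inverse X1)"
      using vc_pow[of 2 "inverse X1", symmetric] by (simp only: mult.assoc[symmetric])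
    also have "\<dots> = v powi 2 * (M' * inverse X1)" using X1nz by simp
    finally show ?thesis .
  qed
  have "seedM v (Xcl s) (Ls s) (\<lambda>i. (if i = 1 then -1 else 0) + max 0 (Bs s i 1))
       = v powi (2 * int s * int s + 2 * int s - 1) * inverse X1 * (Mk 0 0 1 0 powi (int s + 1) * Mk 0 0 0 1 powi (int s))"
    unfolding seedM_def e1 using b1 x0 by (simp add: mult.assoc power_int_minus)
  also have "\<dots> = v * M' * inverse X1"
  proof -
    have c: "inverse X1 * v powi (- 2 * int s * int s - 2 * int s) = v powi (- 2 * int s * int s - 2 * int s) * inverse X1"
      by (rule vc_pow[symmetric])
    have ex: "2 * (int s * int s) + 2 * int s - 1 + (- 2 * (int s * int s) - 2 * int s + 2) = 1" by simp
    have "v powi (2 * int s * int s + 2 * int s - 1) * inverse X1 * (v powi (- 2 * int s * int s - 2 * int s) * M')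
        = v powi (2 * int s * int s + 2 * int s - 1) * (v powi (- 2 * int s * int s - 2 * int s) * (inverse X1 * M'))"
    proof -
      have "v powi (2 * int s * int s + 2 * int s - 1) * inverse X1 * (v powi (- 2 * int s * int s - 2 * int s) * M')
          = v powi (2 * int s * int s + 2 * int s - 1) * ((inverse X1 * v powi (- 2 * int s * int s - 2 * int s)) * M')"
        by (simp only: mult.assoc)
      also have "\<dots> = v powi (2 * int s * int s + 2 * int s - 1) * ((v powi (- 2 * int s * int s - 2 * int s) * inverse X1) * M')"
        by (simp only: c)
      finally show ?thesis by (simp only: mult.assoc)
    qed
    also have "\<dots> = v powi 1 * (M' * inverse X1)"
      unfolding cm2 by (simp only: mult.assoc vpadd2 ex)
    finally show ?thesis unfolding y by (simp add: mult.assoc)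
  qed
  finally have s1: "seedM v (Xcl s) (Ls s) (\<lambda>i. (if i = 1 then -1 else 0) + max 0 (Bs s i 1)) = v * M' * inverse X1" .
  have s2: "seedM v (Xcl s) (Ls s) (\<lambda>i. (if i = 1 then -1 else 0) + max 0 (- Bs s i 1)) = X0 * X0 * inverse X1"
    unfolding seedM_def e2 using b1 x0 by (simp add: mult.assoc power_int_minus power2_eq_square)
  show ?thesis unfolding s1 s2 Xs by (simp add: distrib_right)
qed

lemma kseed_eq: "kseed v Mk s = (Xcl s, Bs s, Ls s)"
proof (induction s)
  case 0
  have "(\<lambda>i. if i = 0 then Mk 1 0 0 0 else if i = 1 then Mk 0 1 0 0 else if i = 2 then Mk 0 0 1 0 else Mk 0 0 0 1) = Xcl 0"
    by (intro ext) (simp add: Xcl_def Xv_m1 Xv_m2)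
  then show ?case by (simp add: Bs0 Ls0)
next
  case (Suc s)
  have cl: "(\<lambda>i. if i = s mod 2 then
              seedM v (Xcl s) (Ls s) (\<lambda>i. (if i = s mod 2 then -1 else 0) + max 0 (Bs s i (s mod 2)))
            + seedM v (Xcl s) (Ls s) (\<lambda>i. (if i = s mod 2 then -1 else 0) + max 0 (- Bs s i (s mod 2)))
            else Xcl s i) = Xcl (Suc s)"
  proof (intro ext)
    fix i
    show "(if i = s mod 2 then
              seedM v (Xcl s) (Ls s) (\<lambda>i. (if i = s mod 2 then -1 else 0) + max 0 (Bs s i (s mod 2)))
            + seedM v (Xcl s) (Ls s) (\<lambda>i. (if i = s mod 2 then -1 else 0) + max 0 (- Bs s i (s mod 2)))
            else Xcl s i) = Xcl (Suc s) i"
    proof (cases "even s")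
      case True
      then have m: "s mod 2 = 0" by presburger
      show ?thesis using True seed_even[OF True] by (simp add: m Xcl_def algebra_simps)
    next
      case False
      then have m: "s mod 2 = 1" by presburger
      show ?thesis using False seed_odd[OF False] by (simp add: m Xcl_def algebra_simps)
    qed
  qed
  show ?case using Suc cl by (simp add: mutate_def Bs_step Ls_step)
qed

lemma Mk_inv: "inverse (Mk a b c d) = Mk (- a) (- b) (- c) (- d)"
  by (rule inverse_unique) (simp add: Mkmul Mk0 algebra_simps)

lemma formula:
  "Xv (int n) = Mk 1 0 0 0 powi (- int n - 1) * Mk 0 1 0 0 ^ (n + 2)
         + (\<Sum>(p, r) \<in> {(p, r). p + r \<le> n}.
              qbinom v (n - r) p * qbinom v (n + 1 - p) r
              * Mk (2 * int p - int n - 1) (2 * int r - int n) (int n + 1 - int r) (int p))"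
proof -
  define N where "N = int n"
  define T where "T = {(p, r). p + r \<le> (n::nat)}"
  define f where "f = (\<lambda>(p::nat, r::nat). (2 * int p - N - 1, 2 * int r - N, N + 1 - int r, int p))"
  define g where "g = (- 1 - N, N + 2, 0::int, 0::int)"
  have fT: "finite T"
  proof -
    have "T \<subseteq> {..n} \<times> {..n}" by (auto simp: T_def)
    then show ?thesis by (rule finite_subset) simp
  qed
  have inj: "inj_on f T" by (auto simp: inj_on_def f_def)
  have gf: "g \<notin> f ` T" by (auto simp: g_def f_def T_def N_def)
  have first: "Mk 1 0 0 0 powi (- int n - 1) * Mk 0 1 0 0 ^ (n + 2) = MM g"
  proof -
    have "Mk 1 0 0 0 powi (- int n - 1) = inverse (Mk 1 0 0 0 ^ (n + 1))"
      by (metis minus_diff_eq power_int_minus power_int_of_nat diff_minus_eq_add uminus_add_conv_diff of_nat_Suc Suc_eq_plus1 add.commute)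
    then show ?thesis by (simp add: Mk_pow Mk_inv Mkmul g_def N_def algebra_simps)
  qed
  have coef: "\<And>x. x \<in> T \<Longrightarrow> (case x of (p, r) \<Rightarrow> qbinom v (n - r) p * qbinom v (n + 1 - p) r) = cf N (f x)"
  proof -
    fix x assume x: "x \<in> T"
    obtain p r where pr: "x = (p, r)" by (cases x) auto
    have h: "p + r \<le> n" using x pr by (simp add: T_def)
    have "cf N (f x) = Kc N (N + 1 - int r) (int p)"
      by (simp add: pr f_def cf_def algebra_simps)
    also have "\<dots> = Gn v (n - r) p * Gn v (n + 1 - p) r"
    proof -
      have f1: "nat (int n - int r) = n - r" using h by simp
      have f2: "nat (1 + int n - int p) = Suc n - p" "nat (int n + 1 - int p) = Suc n - p" using h by simp_all
      have f3: "N + 1 \<noteq> int r" using h by (simp add: N_def)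
      show ?thesis using h f3 by (simp add: Kc_def Gi_def f1 f2) (simp add: N_def f1 f2)
    qed
    also have "\<dots> = qbinom v (n - r) p * qbinom v (n + 1 - p) r"
      using h by (simp add: qbinom_G)
    finally show "(case x of (p, r) \<Rightarrow> qbinom v (n - r) p * qbinom v (n + 1 - p) r) = cf N (f x)"
      by (simp add: pr)
  qed
  have sumeq: "(\<Sum>(p, r) \<in> {(p, r). p + r \<le> n}.
              qbinom v (n - r) p * qbinom v (n + 1 - p) r
              * Mk (2 * int p - int n - 1) (2 * int r - int n) (int n + 1 - int r) (int p))
      = valS (f ` T) (cf N)"
  proof -
    have "(\<Sum>(p, r) \<in> {(p, r). p + r \<le> n}.
              qbinom v (n - r) p * qbinom v (n + 1 - p) r
              * Mk (2 * int p - int n - 1) (2 * int r - int n) (int n + 1 - int r) (int p))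
        = (\<Sum>x\<in>T. cf N (f x) * MM (f x))"
      unfolding T_def[symmetric]
    proof (intro sum.cong refl)
      fix x assume x: "x \<in> T"
      show "(case x of (p, r) \<Rightarrow> qbinom v (n - r) p * qbinom v (n + 1 - p) r
              * Mk (2 * int p - int n - 1) (2 * int r - int n) (int n + 1 - int r) (int p)) = cf N (f x) * MM (f x)"
        using coef[OF x] by (cases x) (simp add: f_def N_def)
    qed
    also have "\<dots> = valS (f ` T) (cf N)"
      unfolding valS_def by (rule sum.reindex[OF inj, symmetric, unfolded comp_def])
    finally show ?thesis .
  qed
  have supp: "\<And>b. cf N b \<noteq> 0 \<Longrightarrow> b \<in> insert g (f ` T)"
  proof -
    fix b assume c: "cf N b \<noteq> 0"
    obtain b1 b2 b3 b4 where b: "b = (b1, b2, b3, b4)" by (cases b) auto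
    from c have P: "b1 = 2 * b4 - N - 1" "b2 = N + 2 - 2 * b3" and K: "Kc N b3 b4 \<noteq> 0"
      by (auto simp: cf_def b split: if_splits)
    from Kc_nz[OF K] show "b \<in> insert g (f ` T)"
    proof
      assume "b3 = 0 \<and> b4 = 0"
      then show ?thesis using P by (simp add: b g_def)
    next
      assume h: "0 \<le> b4 \<and> b4 \<le> b3 - 1 \<and> b3 \<le> N + 1"
      define p where "p = nat b4"
      define r where "r = nat (N + 1 - b3)"
      have "int (nat b4 + nat (int n + 1 - b3)) \<le> int n" using h by (simp add: N_def)
      then have "(p, r) \<in> T" by (simp add: T_def p_def r_def N_def del: of_nat_add)
      moreover have "f (p, r) = b" using h P by (simp add: f_def b p_def r_def)
      ultimately show ?thesis by blast
    qed
  qed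
  have "Xv N = valS (insert g (f ` T)) (cf N)"
    unfolding Xv_def using fT supp by (intro valS_eq) (auto intro: cf_supp simp: N_def)
  also have "\<dots> = cf N g * MM g + valS (f ` T) (cf N)"
    unfolding valS_def using fT gf by simp
  also have "cf N g = 1" by (simp add: g_def cf_def Kc_def Gi_neg2)
  finally have "Xv N = MM g + valS (f ` T) (cf N)" by simp
  then show ?thesis unfolding first sumeq N_def .
qed

lemma kron_main: "kron_x v Mk (n + 3) = Xv (int n)"
proof -
  have a: "n + 3 - 2 = n + 1" "(n + 3 - 3) mod 2 = n mod 2" by simp_all
  have "kron_x v Mk (n + 3) = fst (kseed v Mk (n + 1)) (n mod 2)" unfolding kron_x_def a ..
  also have "\<dots> = Xcl (n + 1) (n mod 2)" unfolding kseed_eq by simp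
  also have "\<dots> = Xv (int n)"
    by (cases "even n") (auto simp: Xcl_def)
  finally show ?thesis .
qed

end

theorem mainTheorem5:
  fixes v :: "'k::division_ring" and Mk :: "int \<Rightarrow> int \<Rightarrow> int \<Rightarrow> int \<Rightarrow> 'k"
  assumes "torus_embedding v Mk"
  shows "kron_x v Mk (n + 3) =
           Mk 1 0 0 0 powi (- int n - 1) * Mk 0 1 0 0 ^ (n + 2)
         + (\<Sum>(p, r) \<in> {(p, r). p + r \<le> n}.
              qbinom v (n - r) p * qbinom v (n + 1 - p) r
              * Mk (2 * int p - int n - 1) (2 * int r - int n) (int n + 1 - int r) (int p))"
proof -
  interpret kron v Mk by unfold_locales (rule assms)
  show ?thesis using kron_main formula by simp
qed


end
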